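(* Let $K$ be a field, $A=\{\alpha_1,\dots,\alpha_m\}\subset K$ and $B=\{\beta_1,\dots,\beta_n\}\subset K$ finite sets with $|A|=m$, $|B|=n$, and let $f=\prod_{i=1}^m(x-\alpha_i)=\sum_{i=0}^m f_ix^i$ (so $f_m=1$) and $g=\prod_{j=1}^n(x-\beta_j)=\sum_{i=0}^n g_ix^i$ (so $g_n=1$), with the convention $f_i=0$ for $i<0$ or $i>m$ and $g_i=0$ for $i<0$ or $i>n$. Let $0\le d\le \min\{n-1,m\}$ and let $X=(x_1,\dots,x_{n-d})$ be indeterminates. Let $M$ be the $(m+n-2d)\times(m+n-2d)$ matrix whose rows are indexed by the $n-d$ pairs $(f,j)$, $j=n-d-1,n-d-2,\dots,0$ (in this order), followed by the $m-d$ pairs $(g,j)$, $j=m-d-1,\dots,0$ (in this order), defined as follows: for $c=1,\dots,m-d$, the entry of row $(f,j)$ in column $c$ is the coefficient of $x^{m+n-d-c}$ in $x^jf(x)$, and the entry of row $(g,j)$ in column $c$ is the coefficient of $x^{m+n-d-c}$ in $x^jg(x)$; for $\ell=1,\dots,n-d$, the entry of row $(f,j)$ in column $m-d+\ell$ is $x_\ell^jf(x_\ell)$ and the entry of row $(g,j)$ in column $m-d+\ell$ is $x_\ell^jg(x_\ell)$. Then $$\operatorname{MSyl}_{0,d}(A,B)(X)=\frac{\det M}{\det V(X)}.$$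
   Context: For finite sets $Y,Z$, $\mathcal{R}(Y,Z):=\prod_{y\in Y,z\in Z}(y-z)$, with $\mathcal{R}(Y,Z)=1$ if $Y$ or $Z$ is empty. For $0\le d\le n-1$ and $X=(x_1,\dots,x_{n-d})$, $$\operatorname{MSyl}_{0,d}(A,B)(X):=(-1)^{(m-d)(n-d)}\sum_{B'\subset B,\ |B'|=d}\Big(\prod_{\beta\in B\setminus B'}f(\beta)\Big)\frac{\mathcal{R}(X,B')}{\mathcal{R}(B\setminus B',B')},$$ where $X$ is regarded as the set $\{x_1,\dots,x_{n-d}\}$. $V(X)$ is the $(n-d)\times(n-d)$ Vandermonde matrix whose $\ell$-th column is $(x_\ell^{n-d-1},\dots,x_\ell,1)^T$, so $\det V(X)=\prod_{1\le i<j\le n-d}(x_i-x_j)$. *)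

theory Defs
  imports "HOL-Computational_Algebra.Polynomial" "Jordan_Normal_Form.Determinant"
begin

definition Res :: "'a::comm_ring_1 set \<Rightarrow> 'a set \<Rightarrow> 'a" where
  "Res Y Z = (\<Prod>y\<in>Y. \<Prod>z\<in>Z. y - z)"

definition root_poly :: "'a::comm_ring_1 set \<Rightarrow> 'a poly" where
  "root_poly A = (\<Prod>a\<in>A. [:-a, 1:])"

(* MSyl_{0,d}(A,B)(X), X = {x_0,...,x_{n-d-1}} (0-based indexing of x) *)
definition MSyl0 :: "'a::field set \<Rightarrow> 'a set \<Rightarrow> nat \<Rightarrow> (nat \<Rightarrow> 'a) \<Rightarrow> 'a" where
  "MSyl0 A B d x =
     (let m = card A; n = card B; X = x ` {..<n-d} in
      (-1) ^ ((m-d)*(n-d)) *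
      (\<Sum>B'\<in>{B'. B' \<subseteq> B \<and> card B' = d}.
          (\<Prod>\<beta>\<in>B - B'. poly (root_poly A) \<beta>) * Res X B' / Res (B - B') B'))"

definition vandermonde :: "nat \<Rightarrow> (nat \<Rightarrow> 'a::comm_ring_1) \<Rightarrow> 'a mat" where
  "vandermonde k x = mat k k (\<lambda>(i, l). x l ^ (k - 1 - i))"

(* The matrix M of size (m+n-2d), 0-based rows and columns.
   Row i < n-d is (f, j) with j = n-d-1-i; row n-d+i' is (g, j) with j = m-d-1-i'.
   Column c' < m-d corresponds to c = c'+1: coefficient of x^(m+n-d-c) in x^j p(x).
   Column m-d+l' corresponds to l = l'+1 (variable x l'): x_l^j p(x_l). *)
definition MSyl_matrix :: "'a::field set \<Rightarrow> 'a set \<Rightarrow> nat \<Rightarrow> (nat \<Rightarrow> 'a) \<Rightarrow> 'a mat" where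
  "MSyl_matrix A B d x =
     (let m = card A; n = card B; f = root_poly A; g = root_poly B;
          entry = (\<lambda>p j c. if c < m - d
                          then coeff (monom 1 j * p) (m + n - d - (c + 1))
                          else x (c - (m - d)) ^ j * poly p (x (c - (m - d)))) in
      mat (m + n - 2*d) (m + n - 2*d)
        (\<lambda>(i, c). if i < n - d then entry f (n - d - 1 - i) c
                   else entry g (m - d - 1 - (i - (n - d))) c))"

end

theory Submission
  imports Defs
begin

definition injs :: "nat \<Rightarrow> nat set \<Rightarrow> (nat \<Rightarrow> nat) set" where
  "injs k I = {\<phi>. (\<forall>i\<in>{0..<k}. \<phi> i \<in> I) \<and> (\<forall>i. i \<notin> {0..<k} \<longrightarrow> \<phi> i = i) \<and> inj_on \<phi> {0..<k}}"

lemma finite_injs: "finite I \<Longrightarrow> finite (injs k I)"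
  unfolding injs_def
  by (rule finite_subset[OF _ finite_bounded_functions[of I "{0..<k}"]]) auto

lemma hcb:
  fixes u w :: "nat \<Rightarrow> nat \<Rightarrow> 'a::comm_ring_1"
  assumes I: "finite I"
  shows "det (mat k k (\<lambda>(i,l). \<Sum>b\<in>I. u b i * w b l)) =
    (\<Sum>\<phi>\<in>injs k I. det (mat k k (\<lambda>(i,l). u (\<phi> l) i)) * (\<Prod>l\<in>{0..<k}. w (\<phi> l) l))"
proof -
  let ?A = "mat k k (\<lambda>(i,l). \<Sum>b\<in>I. u b i * w b l)"
  let ?a = "\<lambda>l b. w b l \<cdot>\<^sub>v vec k (u b)"
  let ?F = "{f. (\<forall>i\<in>{0..<k}. f i \<in> I) \<and> (\<forall>i. i \<notin> {0..<k} \<longrightarrow> f i = i)}"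
  let ?g = "\<lambda>\<phi>. det (mat\<^sub>r k k (\<lambda>l. ?a l (\<phi> l)))"
  have a: "?a \<in> {0..<k} \<rightarrow> I \<rightarrow> carrier_vec k" by auto
  have "det ?A = det (transpose_mat ?A)"
    by (rule det_transpose[symmetric]) auto
  also have "transpose_mat ?A = mat\<^sub>r k k (\<lambda>l. finsum_vec TYPE('a) k (?a l) I)"
    by (rule eq_matI, auto simp: index_finsum_vec[OF I] ac_simps)
  also have "det \<dots> = sum ?g ?F"
    by (rule det_linear_rows_sum[OF I a])
  also have "\<dots> = sum (\<lambda>\<phi>. (\<Prod>l\<in>{0..<k}. w (\<phi> l) l) * det (mat\<^sub>r k k (\<lambda>l. vec k (u (\<phi> l))))) ?F"
    by (rule sum.cong[OF refl], rule det_rows_mul) auto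
  also have "\<dots> = sum (\<lambda>\<phi>. (\<Prod>l\<in>{0..<k}. w (\<phi> l) l) * det (mat\<^sub>r k k (\<lambda>l. vec k (u (\<phi> l))))) (injs k I)"
  proof (rule sum.mono_neutral_right)
    show "finite ?F" by (rule finite_bounded_functions[OF I]) auto
    show "injs k I \<subseteq> ?F" unfolding injs_def by auto
    show "\<forall>\<phi>\<in>?F - injs k I. (\<Prod>l\<in>{0..<k}. w (\<phi> l) l) * det (mat\<^sub>r k k (\<lambda>l. vec k (u (\<phi> l)))) = 0"
    proof
      fix \<phi> assume "\<phi> \<in> ?F - injs k I"
      then obtain i j where ij: "i < k" "j < k" "i \<noteq> j" "\<phi> i = \<phi> j"
        unfolding injs_def inj_on_def by auto
      have "det (mat\<^sub>r k k (\<lambda>l. vec k (u (\<phi> l)))) = 0"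
        by (rule det_identical_rows[OF _ ij(3,1,2)]) (use ij in auto)
      then show "(\<Prod>l\<in>{0..<k}. w (\<phi> l) l) * det (mat\<^sub>r k k (\<lambda>l. vec k (u (\<phi> l)))) = 0" by simp
    qed
  qed
  also have "\<dots> = (\<Sum>\<phi>\<in>injs k I. det (mat k k (\<lambda>(i,l). u (\<phi> l) i)) * (\<Prod>l\<in>{0..<k}. w (\<phi> l) l))"
  proof (rule sum.cong[OF refl])
    fix \<phi> assume "\<phi> \<in> injs k I"
    have "mat\<^sub>r k k (\<lambda>l. vec k (u (\<phi> l))) = transpose_mat (mat k k (\<lambda>(i,l). u (\<phi> l) i))"
      by (rule eq_matI) auto
    also have "det \<dots> = det (mat k k (\<lambda>(i,l). u (\<phi> l) i))"
      by (rule det_transpose) auto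
    finally show "(\<Prod>l\<in>{0..<k}. w (\<phi> l) l) * det (mat\<^sub>r k k (\<lambda>l. vec k (u (\<phi> l)))) = det (mat k k (\<lambda>(i,l). u (\<phi> l) i)) * (\<Prod>l\<in>{0..<k}. w (\<phi> l) l)"
      by simp
  qed
  finally show ?thesis .
qed


definition lag :: "'a::field set \<Rightarrow> 'a \<Rightarrow> 'a \<Rightarrow> 'a" where
  "lag P a t = (\<Prod>c\<in>P-{a}. (t - c) / (a - c))"

lemma lag_self: "finite P \<Longrightarrow> lag P a a = 1"
  unfolding lag_def by (rule prod.neutral) auto

lemma lag_other: "finite P \<Longrightarrow> b \<in> P \<Longrightarrow> b \<noteq> a \<Longrightarrow> lag P a b = 0"
  unfolding lag_def by (rule prod_zero) auto

lemma lagrange: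
  fixes p :: "'a::field poly"
  assumes P: "finite P" and deg: "degree p < card P"
  shows "poly p t = (\<Sum>a\<in>P. poly p a * lag P a t)"
proof -
  define q where "q = (\<Sum>a\<in>P. smult (poly p a / (\<Prod>c\<in>P-{a}. a - c)) (\<Prod>c\<in>P-{a}. [:-c, 1:]))"
  have evq: "poly q t = (\<Sum>a\<in>P. poly p a * lag P a t)" for t
    unfolding q_def poly_sum
  proof (rule sum.cong[OF refl])
    fix a assume "a \<in> P"
    have "poly (\<Prod>c\<in>P-{a}. [:-c, 1:]) t = (\<Prod>c\<in>P-{a}. t - c)"
      unfolding poly_prod by (rule prod.cong) auto
    moreover have "lag P a t = (\<Prod>c\<in>P-{a}. t - c) / (\<Prod>c\<in>P-{a}. a - c)"
      unfolding lag_def by (rule prod_dividef)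
    ultimately show "poly (smult (poly p a / (\<Prod>c\<in>P-{a}. a - c)) (\<Prod>c\<in>P-{a}. [:-c, 1:])) t = poly p a * lag P a t"
      unfolding poly_smult by (simp only: times_divide_eq_left times_divide_eq_right)
  qed
  have "degree q \<le> card P - 1"
    unfolding q_def
  proof (rule degree_sum_le[OF P])
    fix a assume a: "a \<in> P"
    have "degree (\<Prod>c\<in>P-{a}. [:-c, 1:]) \<le> sum (degree \<circ> (\<lambda>c. [:-c, 1:])) (P-{a})"
      by (rule degree_prod_sum_le) (use P in auto)
    also have "\<dots> = card (P - {a})" by simp
    also have "\<dots> = card P - 1" using a P by simp
    finally show "degree (smult (poly p a / (\<Prod>c\<in>P-{a}. a - c)) (\<Prod>c\<in>P-{a}. [:-c, 1:])) \<le> card P - 1"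
      by (rule order_trans[OF degree_smult_le])
  qed
  hence dq: "degree q < card P" using deg by linarith
  have "p = q"
  proof (rule poly_eqI_degree[OF _ deg dq])
    fix x assume x: "x \<in> P"
    have "poly q x = (\<Sum>a\<in>P. poly p a * lag P a x)" by (rule evq)
    also have "\<dots> = poly p x * lag P x x + (\<Sum>a\<in>P-{x}. poly p a * lag P a x)"
      by (rule sum.remove[OF P x])
    also have "(\<Sum>a\<in>P-{x}. poly p a * lag P a x) = 0"
    proof (rule sum.neutral, rule ballI)
      fix a assume "a \<in> P - {x}" then have "x \<noteq> a" by auto
      then show "poly p a * lag P a x = 0" by (simp add: lag_other[OF P x])
    qed
    finally show "poly p x = poly q x" by (simp add: lag_self[OF P])
  qed
  show ?thesis using evq[of t, folded \<open>p = q\<close>] .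
qed


lemma vandermonde_carrier[simp]: "vandermonde k x \<in> carrier_mat k k"
  unfolding vandermonde_def by simp

lemma vandermonde_nz:
  fixes x :: "nat \<Rightarrow> 'a::field"
  assumes inj: "inj_on x {..<k}"
  shows "det (vandermonde k x) \<noteq> 0"
proof
  assume "det (vandermonde k x) = 0"
  hence "det (transpose_mat (vandermonde k x)) = 0"
    by (subst det_transpose[of _ k]) auto
  then obtain v where v: "v \<in> carrier_vec k" "v \<noteq> 0\<^sub>v k"
    and vv: "transpose_mat (vandermonde k x) *\<^sub>v v = 0\<^sub>v k"
    by (subst (asm) det_0_iff_vec_prod_zero_field[of _ k]) auto
  define p where "p = (\<Sum>i<k. monom (v $ i) (k - 1 - i))"
  have ev: "poly p (x l) = 0" if l: "l < k" for l
  proof -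
    have "0 = (transpose_mat (vandermonde k x) *\<^sub>v v) $ l" using vv l by simp
    also have "\<dots> = (\<Sum>i<k. x l ^ (k - 1 - i) * v $ i)"
      using l v unfolding vandermonde_def
      by (auto simp: scalar_prod_def atLeast0LessThan intro!: sum.cong)
    also have "\<dots> = poly p (x l)"
      unfolding p_def poly_sum poly_monom by (rule sum.cong) (auto simp: ac_simps)
    finally show ?thesis by simp
  qed
  have k: "k > 0" using v by (cases k) auto
  have dp: "degree p < k"
  proof -
    have "degree p \<le> k - 1" unfolding p_def
      by (rule degree_sum_le) (auto intro: order_trans[OF degree_monom_le])
    thus ?thesis using k by linarith
  qed
  have card: "card (x ` {..<k}) = k" using card_image[OF inj] by simp
  have "p = 0"
    by (rule poly_eqI_degree[of "x ` {..<k}"]) (use ev dp card in auto)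
  have "v $ i = 0" if i: "i < k" for i
  proof -
    have "0 = coeff p (k - 1 - i)" using \<open>p = 0\<close> by simp
    also have "\<dots> = (\<Sum>j<k. if k - 1 - i = k - 1 - j then v $ j else 0)"
      unfolding p_def coeff_sum coeff_monom by (rule sum.cong) auto
    also have "\<dots> = (\<Sum>j<k. if j = i then v $ j else 0)"
      by (rule sum.cong) (use i in auto)
    also have "\<dots> = v $ i" using i by simp
    finally show ?thesis by simp
  qed
  hence "v = 0\<^sub>v k" using v by (intro eq_vecI) auto
  with v show False by simp
qed


definition Ef :: "(nat \<Rightarrow> 'a::comm_ring_1) \<Rightarrow> nat \<Rightarrow> nat set \<Rightarrow> 'a \<Rightarrow> 'a" where
  "Ef bs n S t = (\<Prod>c\<in>{0..<n}-S. t - bs c)"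

lemma lag_split:
  fixes bs :: "nat \<Rightarrow> 'a::field"
  assumes inj: "inj_on bs {0..<n}" and S: "S \<subseteq> {0..<n}" and b: "b \<in> S"
  shows "lag (bs ` {0..<n}) (bs b) t = Ef bs n S t / Ef bs n S (bs b) * lag (bs ` S) (bs b) t"
proof -
  have bn: "b < n" using S b by auto
  have split: "bs ` {0..<n} - {bs b} = bs ` ({0..<n} - S) \<union> (bs ` S - {bs b})"
  proof (intro equalityI subsetI)
    fix y assume "y \<in> bs ` {0..<n} - {bs b}"
    then obtain c where c: "c < n" "y = bs c" "bs c \<noteq> bs b" by auto
    thus "y \<in> bs ` ({0..<n} - S) \<union> (bs ` S - {bs b})" by (cases "c \<in> S") auto
  next
    fix y assume "y \<in> bs ` ({0..<n} - S) \<union> (bs ` S - {bs b})"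
    moreover have "bs c \<noteq> bs b" if "c \<in> {0..<n} - S" for c
      using that inj b bn S unfolding inj_on_def by (metis DiffE atLeastLessThan_iff zero_le)
    ultimately show "y \<in> bs ` {0..<n} - {bs b}" using S by auto
  qed
  have disj: "bs ` ({0..<n} - S) \<inter> (bs ` S - {bs b}) = {}"
    using inj S unfolding inj_on_def by auto
  have injc: "inj_on bs ({0..<n} - S)" by (rule inj_on_subset[OF inj]) auto
  have "lag (bs ` {0..<n}) (bs b) t =
     (\<Prod>c\<in>bs ` ({0..<n} - S). (t - c) / (bs b - c)) * (\<Prod>c\<in>bs ` S - {bs b}. (t - c) / (bs b - c))"
    unfolding lag_def split by (rule prod.union_disjoint[OF _ _ disj]) (use S finite_subset in auto)
  also have "(\<Prod>c\<in>bs ` ({0..<n} - S). (t - c) / (bs b - c)) = (\<Prod>c\<in>{0..<n} - S. (t - bs c) / (bs b - bs c))"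
    by (subst prod.reindex[OF injc]) simp
  also have "\<dots> = Ef bs n S t / Ef bs n S (bs b)"
    unfolding Ef_def by (rule prod_dividef)
  also have "(\<Prod>c\<in>bs ` S - {bs b}. (t - c) / (bs b - c)) = lag (bs ` S) (bs b) t"
    unfolding lag_def ..
  finally show ?thesis .
qed

lemma img_injs:
  assumes "finite S" "card S = k" "\<phi> \<in> injs k S"
  shows "\<phi> ` {0..<k} = S"
proof -
  have "\<phi> ` {0..<k} \<subseteq> S" "card (\<phi> ` {0..<k}) = k"
    using assms card_image[of \<phi> "{0..<k}"] unfolding injs_def by auto
  thus ?thesis using assms card_subset_eq by metis
qed

lemma injs_group:
  assumes "S \<subseteq> {0..<n}" "card S = k"
  shows "{\<phi>. \<phi> \<in> injs k {0..<n} \<and> \<phi> ` {0..<k} = S} = injs k S"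
proof -
  have "finite S" using assms(1) finite_subset by blast
  thus ?thesis using assms img_injs[of S k] unfolding injs_def by blast
qed

lemma lag_vandermonde:
  fixes bs :: "nat \<Rightarrow> 'a::field"
  assumes inj: "inj_on bs S" and S: "finite S" "card S = k"
  shows "mat k k (\<lambda>(i,l). \<Sum>b\<in>S. bs b ^ (k - 1 - i) * lag (bs ` S) (bs b) (x l)) = vandermonde k x"
proof (rule eq_matI)
  fix i l assume i: "i < dim_row (vandermonde k x)" and l: "l < dim_col (vandermonde k x)"
  have ck: "card (bs ` S) = k" using card_image[OF inj] S by simp
  have "(\<Sum>b\<in>S. bs b ^ (k - 1 - i) * lag (bs ` S) (bs b) (x l))
      = (\<Sum>a\<in>bs ` S. poly (monom 1 (k - 1 - i)) a * lag (bs ` S) a (x l))"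
    by (subst sum.reindex[OF inj]) (simp add: poly_monom)
  also have "\<dots> = poly (monom 1 (k - 1 - i)) (x l)"
    by (rule lagrange[symmetric]) (use i S ck in \<open>auto simp: degree_monom_eq vandermonde_def\<close>)
  finally show "mat k k (\<lambda>(i,l). \<Sum>b\<in>S. bs b ^ (k - 1 - i) * lag (bs ` S) (bs b) (x l)) $$ (i, l) = vandermonde k x $$ (i, l)"
    using i l by (simp add: vandermonde_def poly_monom)
qed (auto simp: vandermonde_def)


lemma core:
  fixes bs x :: "nat \<Rightarrow> 'a::field" and fv :: "'a \<Rightarrow> 'a"
  assumes inj: "inj_on bs {0..<n}"
  shows "det (mat k k (\<lambda>(i,l). \<Sum>b\<in>{0..<n}. bs b ^ (k - 1 - i) * (fv (bs b) * lag (bs ` {0..<n}) (bs b) (x l))))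
    = det (vandermonde k x) * (\<Sum>S\<in>{S. S \<subseteq> {0..<n} \<and> card S = k}.
         (\<Prod>b\<in>S. fv (bs b)) * (\<Prod>l\<in>{0..<k}. Ef bs n S (x l)) / (\<Prod>b\<in>S. Ef bs n S (bs b)))"
proof -
  let ?B = "bs ` {0..<n}"
  let ?D = "\<lambda>\<phi>. det (mat k k (\<lambda>(i,l). bs (\<phi> l) ^ (k - 1 - i)))"
  let ?T = "{S. S \<subseteq> {0..<n} \<and> card S = k}"
  let ?C = "\<lambda>S. (\<Prod>b\<in>S. fv (bs b)) * (\<Prod>l\<in>{0..<k}. Ef bs n S (x l)) / (\<Prod>b\<in>S. Ef bs n S (bs b))"
  let ?h = "\<lambda>\<phi>. ?D \<phi> * (\<Prod>l\<in>{0..<k}. fv (bs (\<phi> l)) * lag ?B (bs (\<phi> l)) (x l))"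
  have "det (mat k k (\<lambda>(i,l). \<Sum>b\<in>{0..<n}. bs b ^ (k - 1 - i) * (fv (bs b) * lag ?B (bs b) (x l))))
      = sum ?h (injs k {0..<n})"
    by (rule hcb) simp
  also have "\<dots> = (\<Sum>S\<in>?T. sum ?h {\<phi>. \<phi> \<in> injs k {0..<n} \<and> \<phi> ` {0..<k} = S})"
  proof (rule sum.group[symmetric])
    show "finite (injs k {0..<n})" by (rule finite_injs) simp
    show "finite ?T" by (rule finite_subset[of _ "Pow {0..<n}"]) auto
    show "(\<lambda>\<phi>. \<phi> ` {0..<k}) ` injs k {0..<n} \<subseteq> ?T"
      unfolding injs_def using card_image by fastforce
  qed
  also have "\<dots> = (\<Sum>S\<in>?T. det (vandermonde k x) * ?C S)"
  proof (rule sum.cong[OF refl])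
    fix S assume "S \<in> ?T"
    hence S: "S \<subseteq> {0..<n}" "card S = k" by auto
    have fS: "finite S" using S(1) finite_subset by blast
    have injS: "inj_on bs S" by (rule inj_on_subset[OF inj S(1)])
    have "sum ?h {\<phi>. \<phi> \<in> injs k {0..<n} \<and> \<phi> ` {0..<k} = S} = sum ?h (injs k S)"
      unfolding injs_group[OF S] ..
    also have "\<dots> = (\<Sum>\<phi>\<in>injs k S. ?C S * (?D \<phi> * (\<Prod>l\<in>{0..<k}. lag (bs ` S) (bs (\<phi> l)) (x l))))"
    proof (rule sum.cong[OF refl])
      fix \<phi> assume \<phi>: "\<phi> \<in> injs k S"
      have img: "\<phi> ` {0..<k} = S" by (rule img_injs[OF fS S(2) \<phi>])
      have injp: "inj_on \<phi> {0..<k}" using \<phi> unfolding injs_def by auto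
      have inS: "\<phi> l \<in> S" if "l < k" for l using \<phi> that unfolding injs_def by auto
      have "(\<Prod>l\<in>{0..<k}. fv (bs (\<phi> l)) * lag ?B (bs (\<phi> l)) (x l))
         = (\<Prod>l\<in>{0..<k}. fv (bs (\<phi> l)) * (Ef bs n S (x l) / Ef bs n S (bs (\<phi> l)) * lag (bs ` S) (bs (\<phi> l)) (x l)))"
        by (rule prod.cong[OF refl]) (simp add: lag_split[OF inj S(1) inS])
      also have "\<dots> = (\<Prod>l\<in>{0..<k}. fv (bs (\<phi> l))) * (\<Prod>l\<in>{0..<k}. Ef bs n S (x l))
           / (\<Prod>l\<in>{0..<k}. Ef bs n S (bs (\<phi> l))) * (\<Prod>l\<in>{0..<k}. lag (bs ` S) (bs (\<phi> l)) (x l))"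
        by (simp add: prod.distrib prod_dividef)
      also have "(\<Prod>l\<in>{0..<k}. fv (bs (\<phi> l))) = (\<Prod>b\<in>S. fv (bs b))"
        using prod.reindex[OF injp, of "\<lambda>b. fv (bs b)"] img by simp
      also have "(\<Prod>l\<in>{0..<k}. Ef bs n S (bs (\<phi> l))) = (\<Prod>b\<in>S. Ef bs n S (bs b))"
        using prod.reindex[OF injp, of "\<lambda>b. Ef bs n S (bs b)"] img by simp
      finally show "?h \<phi> = ?C S * (?D \<phi> * (\<Prod>l\<in>{0..<k}. lag (bs ` S) (bs (\<phi> l)) (x l)))"
        by simp
    qed
    also have "\<dots> = ?C S * (\<Sum>\<phi>\<in>injs k S. ?D \<phi> * (\<Prod>l\<in>{0..<k}. lag (bs ` S) (bs (\<phi> l)) (x l)))"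
      by (rule sum_distrib_left[symmetric])
    also have "(\<Sum>\<phi>\<in>injs k S. ?D \<phi> * (\<Prod>l\<in>{0..<k}. lag (bs ` S) (bs (\<phi> l)) (x l)))
       = det (mat k k (\<lambda>(i,l). \<Sum>b\<in>S. bs b ^ (k - 1 - i) * lag (bs ` S) (bs b) (x l)))"
      by (rule hcb[symmetric, OF fS])
    also have "\<dots> = det (vandermonde k x)"
      unfolding lag_vandermonde[OF injS fS S(2)] ..
    finally show "sum ?h {\<phi>. \<phi> \<in> injs k {0..<n} \<and> \<phi> ` {0..<k} = S} = det (vandermonde k x) * ?C S"
      by simp
  qed
  also have "\<dots> = det (vandermonde k x) * (\<Sum>S\<in>?T. ?C S)"
    by (rule sum_distrib_left[symmetric])
  finally show ?thesis .
qed


lemma root_poly_monic: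
  assumes "finite A"
  shows "degree (root_poly A :: 'a::idom poly) = card A \<and> lead_coeff (root_poly A) = 1"
  using assms
proof (induction A rule: finite_induct)
  case empty
  then show ?case by (simp add: root_poly_def)
next
  case (insert a F)
  have eq: "root_poly (insert a F) = [:-a, 1:] * root_poly F"
    unfolding root_poly_def using insert by simp
  have nz: "root_poly F \<noteq> 0" using insert by auto
  have d: "degree ([:-a, 1:] * root_poly F) = degree [:-a, 1:] + degree (root_poly F)"
    by (rule degree_mult_eq) (use nz in auto)
  have l: "lead_coeff ([:-a, 1:] * root_poly F) = lead_coeff [:-a, 1:] * lead_coeff (root_poly F)"
    by (rule lead_coeff_mult)
  have h1: "degree (root_poly F) = card F" and h2: "lead_coeff (root_poly F) = 1" using insert by auto
  have "degree (root_poly (insert a F)) = card (insert a F)" unfolding eq d using insert h1 by simp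
  moreover have "lead_coeff (root_poly (insert a F)) = 1" unfolding eq l h2 by simp
  ultimately show ?case by blast
qed

lemma root_poly_root:
  assumes "finite B" "b \<in> B"
  shows "poly (root_poly B) b = 0"
  unfolding root_poly_def poly_prod using assms by (intro prod_zero) auto

lemma poly_sum_lt:
  fixes q :: "'a::comm_semiring_1 poly"
  assumes "\<forall>t\<ge>r. coeff q t = 0"
  shows "poly q y = (\<Sum>i<r. coeff q i * y ^ i)"
proof -
  have "poly q y = (\<Sum>i\<le>degree q. coeff q i * y ^ i)" by (rule poly_altdef)
  also have "\<dots> = (\<Sum>i<Suc (degree q) + r. coeff q i * y ^ i)"
    by (rule sum.mono_neutral_left) (auto simp: coeff_eq_0)
  also have "\<dots> = (\<Sum>i<r. coeff q i * y ^ i)"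
    by (rule sum.mono_neutral_right) (use assms in auto)
  finally show ?thesis .
qed

lemma rowid_a:
  assumes p: "p = q * g + rr" and q: "\<forall>t\<ge>r. coeff q t = 0" and rr: "\<forall>e\<ge>n. coeff rr e = 0"
    and c: "c < r"
  shows "coeff p (r + n - 1 - c) = (\<Sum>c'<r. coeff q (r - 1 - c') * (if c \<le> n + c' then coeff g (n + c' - c) else 0))"
proof -
  let ?e = "r + n - 1 - c"
  let ?F = "\<lambda>t. coeff q t * coeff g (?e - t)"
  have "coeff p ?e = coeff (q * g) ?e" using p rr c by simp
  also have "\<dots> = (\<Sum>t\<le>?e. ?F t)" by (rule coeff_mult)
  also have "\<dots> = (\<Sum>t\<in>{..?e} \<inter> {..<r}. ?F t)"
    by (rule sum.mono_neutral_right) (use q in \<open>auto simp: not_less\<close>)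
  also have "\<dots> = (\<Sum>t\<in>{t\<in>{..<r}. t \<le> ?e}. ?F t)"
    by (rule sum.cong) auto
  also have "\<dots> = (\<Sum>t<r. if t \<le> ?e then ?F t else 0)"
    by (rule sum.inter_filter) simp
  also have "\<dots> = (\<Sum>c'<r. if r - Suc c' \<le> ?e then ?F (r - Suc c') else 0)"
    by (rule sum.nat_diff_reindex[symmetric])
  also have "\<dots> = (\<Sum>c'<r. coeff q (r - 1 - c') * (if c \<le> n + c' then coeff g (n + c' - c) else 0))"
  proof (rule sum.cong[OF refl])
    fix c' assume "c' \<in> {..<r}"
    hence c': "c' < r" by simp
    have e1: "(r - Suc c' \<le> ?e) = (c \<le> n + c')" using c c' by linarith
    have e2: "?e - (r - Suc c') = n + c' - c" using c c' by linarith
    have e3: "r - Suc c' = r - 1 - c'" by simp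
    show "(if r - Suc c' \<le> ?e then ?F (r - Suc c') else 0) =
      coeff q (r - 1 - c') * (if c \<le> n + c' then coeff g (n + c' - c) else 0)"
      using e1 e2 by (cases "c \<le> n + c'") auto
  qed
  finally show ?thesis .
qed

lemma rowid_b:
  fixes q :: "'a::comm_semiring_1 poly"
  assumes p: "p = q * g + rr" and q: "\<forall>t\<ge>r. coeff q t = 0"
  shows "poly p y = (\<Sum>c'<r. coeff q (r - 1 - c') * (y ^ (r - 1 - c') * poly g y)) + poly rr y"
proof -
  have A: "poly q y = (\<Sum>c'<r. coeff q (r - Suc c') * y ^ (r - Suc c'))"
    by (subst sum.nat_diff_reindex) (rule poly_sum_lt[OF q])
  have "poly q y * poly g y = (\<Sum>c'<r. coeff q (r - 1 - c') * (y ^ (r - 1 - c') * poly g y))"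
    unfolding A sum_distrib_right by (simp add: mult.assoc)
  then show ?thesis using p by simp
qed

lemma div_coeff_bound:
  fixes p g :: "'a::field poly"
  assumes g: "degree g = n" "g \<noteq> 0" and n: "n \<ge> 1" and p: "degree p < r + n"
  shows "\<forall>t\<ge>r. coeff (p div g) t = 0"
proof (cases "p div g = 0")
  case True then show ?thesis by simp
next
  case False
  have eq: "p div g * g = p - p mod g" using div_mult_mod_eq[of p g] by (simp add: algebra_simps)
  have "degree (p mod g) < r + n"
  proof (cases "p mod g = 0")
    case True then show ?thesis using n by simp
  next
    case False then show ?thesis using degree_mod_less'[OF g(2) False] g by simp
  qed
  hence "degree (p - p mod g) < r + n"
    using p degree_diff_le_max[of p "p mod g"] by linarith
  hence "degree (p div g) + n < r + n"
    using eq degree_mult_eq[OF False g(2)] g by simp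
  thus ?thesis by (auto intro: coeff_eq_0)
qed

lemma mod_coeff_bound:
  fixes p g :: "'a::field poly"
  assumes g: "degree g = n" "g \<noteq> 0" and n: "n \<ge> 1"
  shows "\<forall>e\<ge>n. coeff (p mod g) e = 0"
proof (cases "p mod g = 0")
  case True then show ?thesis by simp
next
  case False then show ?thesis using degree_mod_less'[OF g(2) False] g by (auto intro: coeff_eq_0)
qed


lemma det_block:
  fixes P Q Rr :: "nat \<Rightarrow> 'a::field poly" and g :: "'a poly" and x :: "nat \<Rightarrow> 'a"
  assumes dec: "\<And>i. i < k + r \<Longrightarrow> P i = Q i * g + Rr i"
    and Qb: "\<And>i. i < k + r \<Longrightarrow> \<forall>t\<ge>r. coeff (Q i) t = 0"
    and Rb: "\<And>i. i < k + r \<Longrightarrow> \<forall>e\<ge>n. coeff (Rr i) e = 0"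
    and gn: "coeff g n = 1" and gb: "\<forall>e>n. coeff g e = 0"
    and Qg: "\<And>i. k \<le> i \<Longrightarrow> i < k + r \<Longrightarrow> Q i = monom 1 (r - 1 - (i - k))"
    and Rg: "\<And>i. k \<le> i \<Longrightarrow> i < k + r \<Longrightarrow> Rr i = 0"
  shows "det (mat (k + r) (k + r) (\<lambda>(i,c). if c < r then coeff (P i) (r + n - 1 - c) else poly (P i) (x (c - r))))
    = (-1) ^ (k * r) * det (mat k k (\<lambda>(i,l). poly (Rr i) (x l)))"
proof -
  let ?N = "k + r"
  define M where "M = mat ?N ?N (\<lambda>(i,c). if c < r then coeff (P i) (r + n - 1 - c) else poly (P i) (x (c - r)))"
  define Mq where "Mq = mat ?N ?N (\<lambda>(i,c). if c < r then coeff (Q i) (r - 1 - c) else poly (Rr i) (x (c - r)))"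
  define T where "T = mat ?N ?N (\<lambda>(j,c). if c < r then (if j < r then (if c \<le> n + j then coeff g (n + j - c) else 0) else 0)
     else (if j < r then x (c - r) ^ (r - 1 - j) * poly g (x (c - r)) else (if j = c then 1 else 0)))"
  have MqC: "Mq \<in> carrier_mat ?N ?N" and TC: "T \<in> carrier_mat ?N ?N" unfolding Mq_def T_def by auto
  have "M = Mq * T"
  proof (rule eq_matI)
    fix i c assume i: "i < dim_row (Mq * T)" and c: "c < dim_col (Mq * T)"
    hence i: "i < ?N" and c: "c < ?N" using MqC TC by auto
    have "(Mq * T) $$ (i, c) = (\<Sum>j\<in>{0..<?N}. Mq $$ (i, j) * T $$ (j, c))"
      using i c MqC TC by (simp add: scalar_prod_def)
    also have "\<dots> = (\<Sum>j\<in>{0..<r}. Mq $$ (i, j) * T $$ (j, c)) + (\<Sum>j\<in>{r..<?N}. Mq $$ (i, j) * T $$ (j, c))"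
      by (rule sum.atLeastLessThan_concat[symmetric]) auto
    also have "\<dots> = M $$ (i, c)"
    proof (cases "c < r")
      case True
      have z: "(\<Sum>j\<in>{r..<?N}. Mq $$ (i, j) * T $$ (j, c)) = 0"
        by (rule sum.neutral) (use True in \<open>auto simp: T_def\<close>)
      have "(\<Sum>j\<in>{0..<r}. Mq $$ (i, j) * T $$ (j, c))
         = (\<Sum>j<r. coeff (Q i) (r - 1 - j) * (if c \<le> n + j then coeff g (n + j - c) else 0))"
        unfolding atLeast0LessThan by (rule sum.cong) (use True i in \<open>auto simp: T_def Mq_def\<close>)
      also have "\<dots> = coeff (P i) (r + n - 1 - c)"
        by (rule rowid_a[symmetric, OF dec[OF i] Qb[OF i] Rb[OF i] True])
      finally show ?thesis using z True i c by (simp add: M_def)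
    next
      case False
      have z: "(\<Sum>j\<in>{r..<?N}. Mq $$ (i, j) * T $$ (j, c)) = poly (Rr i) (x (c - r))"
      proof -
        have "(\<Sum>j\<in>{r..<?N}. Mq $$ (i, j) * T $$ (j, c)) = (\<Sum>j\<in>{r..<?N}. if j = c then poly (Rr i) (x (c - r)) else 0)"
          by (rule sum.cong) (use False i c in \<open>auto simp: T_def Mq_def\<close>)
        also have "\<dots> = poly (Rr i) (x (c - r))" using False c by simp
        finally show ?thesis .
      qed
      have "(\<Sum>j\<in>{0..<r}. Mq $$ (i, j) * T $$ (j, c))
         = (\<Sum>j<r. coeff (Q i) (r - 1 - j) * (x (c - r) ^ (r - 1 - j) * poly g (x (c - r))))"
        unfolding atLeast0LessThan by (rule sum.cong) (use False i c in \<open>auto simp: T_def Mq_def\<close>)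
      then have "(\<Sum>j\<in>{0..<r}. Mq $$ (i, j) * T $$ (j, c)) + (\<Sum>j\<in>{r..<?N}. Mq $$ (i, j) * T $$ (j, c))
         = poly (P i) (x (c - r))"
        using z rowid_b[OF dec[OF i] Qb[OF i], of "x (c - r)"] by simp
      then show ?thesis using False i c by (simp add: M_def)
    qed
    finally show "M $$ (i, c) = (Mq * T) $$ (i, c)" by simp
  qed (use MqC TC in \<open>auto simp: M_def\<close>)
  have detT: "det T = 1"
  proof -
    have ut: "upper_triangular T"
      unfolding upper_triangular_def
    proof (intro allI impI)
      fix i j assume i: "i < dim_row T" and ji: "j < i"
      show "T $$ (i, j) = 0"
      proof (cases "j < r")
        case True
        then show ?thesis using i ji gb by (auto simp: T_def)
      next
        case False
        then show ?thesis using i ji by (auto simp: T_def)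
      qed
    qed
    have "det T = prod_list (diag_mat T)" by (rule det_upper_triangular[OF ut TC])
    also have "\<dots> = (\<Prod>i = 0..<?N. T $$ (i, i))" unfolding prod_list_diag_prod using TC by simp
    also have "\<dots> = 1" by (rule prod.neutral) (auto simp: T_def gn)
    finally show ?thesis .
  qed
  have detM: "det M = det Mq"
    using det_mult[OF MqC TC] detT \<open>M = Mq * T\<close> by simp
  have "det Mq = (-1) ^ (k * r) * det (mat ?N ?N (\<lambda>(i,j). Mq $$ (i, if j < k then j + r else j - k)))"
    by (rule det_swap_cols[OF MqC])
  also have "mat ?N ?N (\<lambda>(i,j). Mq $$ (i, if j < k then j + r else j - k))
     = four_block_mat (mat k k (\<lambda>(i,l). poly (Rr i) (x l))) (mat k r (\<lambda>(i,c). coeff (Q i) (r - 1 - c))) (0\<^sub>m r k) (1\<^sub>m r)"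
  proof (rule eq_matI)
    fix i j assume i: "i < dim_row (four_block_mat (mat k k (\<lambda>(i,l). poly (Rr i) (x l))) (mat k r (\<lambda>(i,c). coeff (Q i) (r - 1 - c))) (0\<^sub>m r k) (1\<^sub>m r))"
      and j: "j < dim_col (four_block_mat (mat k k (\<lambda>(i,l). poly (Rr i) (x l))) (mat k r (\<lambda>(i,c). coeff (Q i) (r - 1 - c))) (0\<^sub>m r k) (1\<^sub>m r))"
    hence i: "i < ?N" and j: "j < ?N" by auto
    show "mat ?N ?N (\<lambda>(i,j). Mq $$ (i, if j < k then j + r else j - k)) $$ (i, j) =
      four_block_mat (mat k k (\<lambda>(i,l). poly (Rr i) (x l))) (mat k r (\<lambda>(i,c). coeff (Q i) (r - 1 - c))) (0\<^sub>m r k) (1\<^sub>m r) $$ (i, j)"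
    proof (cases "i < k")
      case True
      then show ?thesis using i j by (auto simp: Mq_def)
    next
      case False
      then show ?thesis using i j Qg[of i] Rg[of i] by (auto simp: Mq_def coeff_monom)
    qed
  qed auto
  also have "det (four_block_mat (mat k k (\<lambda>(i,l). poly (Rr i) (x l))) (mat k r (\<lambda>(i,c). coeff (Q i) (r - 1 - c))) (0\<^sub>m r k) (1\<^sub>m r))
     = det (mat k k (\<lambda>(i,l). poly (Rr i) (x l))) * det (1\<^sub>m r :: 'a mat)"
    by (rule det_four_block_mat_lower_left_zero) auto
  finally show ?thesis using detM by (simp add: M_def)
qed


lemma sum_reindex_B:
  assumes bij: "bij_betw bs {0..<n} B" and k: "k = n - d" and d: "d \<le> n"
  shows "(\<Sum>B'\<in>{B'. B' \<subseteq> B \<and> card B' = d}. G B') = (\<Sum>S\<in>{S. S \<subseteq> {0..<n} \<and> card S = k}. G (bs ` ({0..<n} - S)))"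
proof -
  let ?I = "{0..<n}"
  let ?h = "\<lambda>S. bs ` (?I - S)"
  have inj: "inj_on bs ?I" using bij by (rule bij_betw_imp_inj_on)
  have img: "bs ` ?I = B" using bij by (rule bij_betw_imp_surj_on)
  have "bij_betw ?h {S. S \<subseteq> ?I \<and> card S = k} {B'. B' \<subseteq> B \<and> card B' = d}"
    unfolding bij_betw_def
  proof
    show "inj_on ?h {S. S \<subseteq> ?I \<and> card S = k}"
    proof (rule inj_onI)
      fix S1 S2 assume S1: "S1 \<in> {S. S \<subseteq> ?I \<and> card S = k}" and S2: "S2 \<in> {S. S \<subseteq> ?I \<and> card S = k}"
        and eq: "?h S1 = ?h S2"
      have "?I - S1 = ?I - S2"
        using eq inj_on_image_eq_iff[OF inj, of "?I - S1" "?I - S2"] by auto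
      thus "S1 = S2" using S1 S2 by blast
    qed
    show "?h ` {S. S \<subseteq> ?I \<and> card S = k} = {B'. B' \<subseteq> B \<and> card B' = d}"
    proof (intro equalityI subsetI)
      fix B' assume "B' \<in> ?h ` {S. S \<subseteq> ?I \<and> card S = k}"
      then obtain S where S: "S \<subseteq> ?I" "card S = k" and B': "B' = ?h S" by auto
      have "card B' = card (?I - S)" unfolding B'
        by (rule card_image, rule inj_on_subset[OF inj]) auto
      also have "\<dots> = n - k" using S by (simp add: card_Diff_subset finite_subset)
      also have "\<dots> = d" using k d by simp
      finally show "B' \<in> {B'. B' \<subseteq> B \<and> card B' = d}" using img B' by auto
    next
      fix B' assume B': "B' \<in> {B'. B' \<subseteq> B \<and> card B' = d}"
      define J where "J = {c\<in>?I. bs c \<in> B'}"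
      have J: "J \<subseteq> ?I" unfolding J_def by auto
      have bJ: "bs ` J = B'" using B' img unfolding J_def by auto
      have cJ: "card J = d"
        using B' bJ card_image[OF inj_on_subset[OF inj J]] by simp
      have "?I - (?I - J) = J" using J by auto
      hence "?h (?I - J) = B'" using bJ by simp
      moreover have "card (?I - J) = k"
        using cJ J k by (simp add: card_Diff_subset finite_subset)
      ultimately show "B' \<in> ?h ` {S. S \<subseteq> ?I \<and> card S = k}"
        by (intro image_eqI[of _ _ "?I - J"]) auto
    qed
  qed
  thus ?thesis by (rule sum.reindex_bij_betw[symmetric])
qed

lemma term_conv:
  fixes bs x :: "nat \<Rightarrow> 'a::field" and fv :: "'a \<Rightarrow> 'a"
  assumes inj: "inj_on bs {0..<n}" and injx: "inj_on x {..<k}" and S: "S \<subseteq> {0..<n}"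
  shows "(\<Prod>\<beta>\<in>bs ` {0..<n} - bs ` ({0..<n} - S). fv \<beta>) * Res (x ` {..<k}) (bs ` ({0..<n} - S))
           / Res (bs ` {0..<n} - bs ` ({0..<n} - S)) (bs ` ({0..<n} - S))
    = (\<Prod>b\<in>S. fv (bs b)) * (\<Prod>l\<in>{0..<k}. Ef bs n S (x l)) / (\<Prod>b\<in>S. Ef bs n S (bs b))"
proof -
  have diff: "bs ` {0..<n} - bs ` ({0..<n} - S) = bs ` S"
    using inj S unfolding inj_on_def by auto
  have injS: "inj_on bs S" by (rule inj_on_subset[OF inj S])
  have injC: "inj_on bs ({0..<n} - S)" by (rule inj_on_subset[OF inj]) auto
  have E: "(\<Prod>z\<in>bs ` ({0..<n} - S). t - z) = Ef bs n S t" for t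
    unfolding Ef_def by (subst prod.reindex[OF injC]) simp
  have 1: "(\<Prod>\<beta>\<in>bs ` S. fv \<beta>) = (\<Prod>b\<in>S. fv (bs b))"
    by (subst prod.reindex[OF injS]) simp
  have 2: "Res (x ` {..<k}) (bs ` ({0..<n} - S)) = (\<Prod>l\<in>{0..<k}. Ef bs n S (x l))"
    unfolding Res_def E by (subst prod.reindex[OF injx]) (simp add: atLeast0LessThan)
  have 3: "Res (bs ` S) (bs ` ({0..<n} - S)) = (\<Prod>b\<in>S. Ef bs n S (bs b))"
    unfolding Res_def E by (subst prod.reindex[OF injS]) simp
  show ?thesis unfolding diff 1 2 3 ..
qed


theorem proposition2p8:
  fixes A B :: "'a::field set" and m n d :: nat and x :: "nat \<Rightarrow> 'a"
  assumes "finite A" and "finite B" and "card A = m" and "card B = n"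
    and "d \<le> n - 1" and "d \<le> m" and "n \<ge> 1"
    and "inj_on x {..<n-d}"
  shows "MSyl0 A B d x = det (MSyl_matrix A B d x) / det (vandermonde (n - d) x)"
proof -
  have dn: "d \<le> n" using assms(5) by linarith
  define r where "r = m - d"
  define k where "k = n - d"
  have kpos: "k \<ge> 1" using assms(5,7) unfolding k_def by linarith
  have Nkr: "m + n - 2 * d = k + r" using assms(5,6,7) unfolding k_def r_def by linarith
  define f where "f = root_poly A"
  define g where "g = root_poly B"
  have gdeg: "degree g = n" and glc: "coeff g n = 1"
    using root_poly_monic[OF assms(2)] assms(4) unfolding g_def by auto
  have gnz: "g \<noteq> 0" using glc by auto
  have gb: "\<forall>e>n. coeff g e = 0" using gdeg coeff_eq_0 by auto
  have fdeg: "degree f = m" using root_poly_monic[OF assms(1)] assms(3) unfolding f_def by auto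
  obtain bs where bij: "bij_betw bs {0..<n} B"
    using ex_bij_betw_nat_finite[OF assms(2)] assms(4) by auto
  have inj: "inj_on bs {0..<n}" using bij by (rule bij_betw_imp_inj_on)
  have img: "bs ` {0..<n} = B" using bij by (rule bij_betw_imp_surj_on)
  define P where "P i = (if i < k then monom 1 (k - 1 - i) * f else monom 1 (r - 1 - (i - k)) * g)" for i
  define Q where "Q i = (if i < k then P i div g else monom 1 (r - 1 - (i - k)))" for i
  define Rr where "Rr i = (if i < k then P i mod g else 0)" for i
  have Mat: "MSyl_matrix A B d x = mat (k + r) (k + r)
      (\<lambda>(i,c). if c < r then coeff (P i) (r + n - 1 - c) else poly (P i) (x (c - r)))"
  proof (rule eq_matI)
    fix i c assume i: "i < dim_row (mat (k + r) (k + r)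
      (\<lambda>(i,c). if c < r then coeff (P i) (r + n - 1 - c) else poly (P i) (x (c - r))))"
      and c: "c < dim_col (mat (k + r) (k + r)
      (\<lambda>(i,c). if c < r then coeff (P i) (r + n - 1 - c) else poly (P i) (x (c - r))))"
    have i: "i < k + r" and c: "c < k + r" using i c by auto
    have e1: "m + n - Suc (d + c) = r + n - Suc c" unfolding r_def using assms(6) by linarith
    have e2: "n - d - 1 - i = k - 1 - i" "m - d - 1 - (i - (n - d)) = r - 1 - (i - k)" "c - (m - d) = c - r"
      unfolding k_def r_def by auto
    show "MSyl_matrix A B d x $$ (i, c) = mat (k + r) (k + r)
      (\<lambda>(i,c). if c < r then coeff (P i) (r + n - 1 - c) else poly (P i) (x (c - r))) $$ (i, c)"
      unfolding MSyl_matrix_def Let_def assms(3,4) Nkr using i c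
      by (simp add: e1 e2 P_def f_def[symmetric] g_def[symmetric] poly_monom k_def[symmetric] r_def[symmetric])
  qed (auto simp: MSyl_matrix_def Let_def assms(3,4) Nkr)
  have detM: "det (MSyl_matrix A B d x) = (-1) ^ (k * r) * det (mat k k (\<lambda>(i,l). poly (Rr i) (x l)))"
    unfolding Mat
  proof (rule det_block[where Q = Q and g = g])
    fix i assume i: "i < k + r"
    show "P i = Q i * g + Rr i"
      unfolding Q_def Rr_def by (simp add: P_def)
    show "\<forall>t\<ge>r. coeff (Q i) t = 0"
    proof (cases "i < k")
      case True
      have "degree (P i) \<le> (k - 1 - i) + m"
        unfolding P_def using True fdeg
        by (simp only: if_True) (rule order_trans[OF degree_mult_le], rule add_mono[OF degree_monom_le], simp)
      hence "degree (P i) < r + n" using kpos assms(5,6) unfolding k_def r_def by linarith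
      then show ?thesis unfolding Q_def using True div_coeff_bound[OF gdeg gnz assms(7)] by simp
    next
      case False
      then show ?thesis unfolding Q_def using i by (auto simp: coeff_monom)
    qed
    show "\<forall>e\<ge>n. coeff (Rr i) e = 0"
      unfolding Rr_def using mod_coeff_bound[OF gdeg gnz assms(7)] by simp
  next
    fix i assume "k \<le> i" "i < k + r"
    then show "Q i = monom 1 (r - 1 - (i - k))" "Rr i = 0" unfolding Q_def Rr_def by auto
  qed (use glc gb in auto)
  have Rmat: "mat k k (\<lambda>(i,l). poly (Rr i) (x l)) = mat k k (\<lambda>(i,l). \<Sum>b\<in>{0..<n}. bs b ^ (k - 1 - i) * (poly f (bs b) * lag (bs ` {0..<n}) (bs b) (x l)))"
  proof (rule eq_matI)
    fix i l assume i: "i < dim_row (mat k k (\<lambda>(i,l). \<Sum>b\<in>{0..<n}. bs b ^ (k - 1 - i) * (poly f (bs b) * lag (bs ` {0..<n}) (bs b) (x l))))"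
      and l: "l < dim_col (mat k k (\<lambda>(i,l). \<Sum>b\<in>{0..<n}. bs b ^ (k - 1 - i) * (poly f (bs b) * lag (bs ` {0..<n}) (bs b) (x l))))"
    have i: "i < k" and l: "l < k" using i l by auto
    have cB: "card B = n" by (rule assms(4))
    have dm: "degree (P i mod g) < card B"
    proof (cases "P i mod g = 0")
      case True then show ?thesis using assms(4,7) by simp
    next
      case False then show ?thesis using degree_mod_less'[OF gnz False] gdeg assms(4) by simp
    qed
    have ev: "poly (P i mod g) \<beta> = \<beta> ^ (k - 1 - i) * poly f \<beta>" if "\<beta> \<in> B" for \<beta>
    proof -
      have "poly (P i) \<beta> = poly (P i div g * g + P i mod g) \<beta>"
        by (simp only: div_mult_mod_eq)
      hence "poly (P i) \<beta> = poly (P i div g) \<beta> * poly g \<beta> + poly (P i mod g) \<beta>"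
        by (simp only: poly_add poly_mult)
      moreover have "poly g \<beta> = 0" unfolding g_def by (rule root_poly_root[OF assms(2) that])
      ultimately show ?thesis using i by (simp add: P_def poly_monom)
    qed
    have "poly (Rr i) (x l) = (\<Sum>\<beta>\<in>B. poly (P i mod g) \<beta> * lag B \<beta> (x l))"
      unfolding Rr_def if_P[OF i] by (rule lagrange[OF assms(2) dm])
    also have "\<dots> = (\<Sum>\<beta>\<in>B. \<beta> ^ (k - 1 - i) * (poly f \<beta> * lag B \<beta> (x l)))"
      by (rule sum.cong[OF refl]) (simp add: ev)
    also have "\<dots> = (\<Sum>b\<in>{0..<n}. bs b ^ (k - 1 - i) * (poly f (bs b) * lag (bs ` {0..<n}) (bs b) (x l)))"
      unfolding img[symmetric] by (subst sum.reindex[OF inj]) (simp add: img)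
    finally show "mat k k (\<lambda>(i,l). poly (Rr i) (x l)) $$ (i, l) = mat k k (\<lambda>(i,l). \<Sum>b\<in>{0..<n}. bs b ^ (k - 1 - i) * (poly f (bs b) * lag (bs ` {0..<n}) (bs b) (x l))) $$ (i, l)"
      using i l by simp
  qed auto
  define C where "C S = (\<Prod>b\<in>S. poly f (bs b)) * (\<Prod>l\<in>{0..<k}. Ef bs n S (x l)) / (\<Prod>b\<in>S. Ef bs n S (bs b))" for S
  have detR: "det (mat k k (\<lambda>(i,l). poly (Rr i) (x l))) = det (vandermonde k x) * (\<Sum>S\<in>{S. S \<subseteq> {0..<n} \<and> card S = k}. C S)"
    unfolding Rmat C_def by (rule core[OF inj])
  have injx: "inj_on x {..<k}" using assms(8) unfolding k_def .
  have V: "det (vandermonde k x) \<noteq> 0" by (rule vandermonde_nz[OF injx])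
  have ms: "MSyl0 A B d x = (-1) ^ (k * r) * (\<Sum>S\<in>{S. S \<subseteq> {0..<n} \<and> card S = k}. C S)"
  proof -
    have "MSyl0 A B d x = (-1) ^ (r * k) * (\<Sum>B'\<in>{B'. B' \<subseteq> B \<and> card B' = d}.
          (\<Prod>\<beta>\<in>B - B'. poly f \<beta>) * Res (x ` {..<k}) B' / Res (B - B') B')"
      unfolding MSyl0_def Let_def assms(3,4) r_def k_def f_def ..
    also have "(\<Sum>B'\<in>{B'. B' \<subseteq> B \<and> card B' = d}.
          (\<Prod>\<beta>\<in>B - B'. poly f \<beta>) * Res (x ` {..<k}) B' / Res (B - B') B')
        = (\<Sum>S\<in>{S. S \<subseteq> {0..<n} \<and> card S = k}. C S)"
      unfolding sum_reindex_B[OF bij k_def dn] 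
    proof (rule sum.cong[OF refl])
      fix S assume "S \<in> {S. S \<subseteq> {0..<n} \<and> card S = k}"
      hence S: "S \<subseteq> {0..<n}" by auto
      show "(\<Prod>\<beta>\<in>B - bs ` ({0..<n} - S). poly f \<beta>) * Res (x ` {..<k}) (bs ` ({0..<n} - S)) / Res (B - bs ` ({0..<n} - S)) (bs ` ({0..<n} - S)) = C S"
        unfolding C_def img[symmetric] by (rule term_conv[OF inj injx S])
    qed
    finally show ?thesis by (simp add: mult.commute)
  qed
  show ?thesis
    unfolding ms detM detR k_def[symmetric] using V by simp
qed

end
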